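(* Let $N\in\mathbb N$. The set $$R_J(N)=\{f\in R(N): \exists a\in\mathbb R_{>0},\ \exists b,c\in\mathbb R \text{ such that } \operatorname{supp}(f)\subseteq\{(n,r)\in\mathbb R^2: n\ge ar^2+br+c\}\}$$ is a ring (a subring of $R(N)$).
   Context: $R(N)=\mathbb C[\zeta^{1/N},\zeta^{-1/N}]((q^{1/N}))$ denotes the ring of formal Laurent–Puiseux series $f=\sum_{n,r\in\frac1N\mathbb Z}c(n,r)q^n\zeta^r$ in which, for each $n$, only finitely many $r$ have $c(n,r)\neq0$, and $n$ is bounded below on the set of $(n,r)$ with $c(n,r)\ne 0$; multiplication is the usual multiplication of formal series. The support is $\operatorname{supp}(f)=\{(n,r)\in(\frac1N\mathbb Z)^2: c(n,r)\neq 0\}$. *)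

theory Defs
  imports Complex_Main
begin

text \<open>A formal series f = sum c(n,r) q^n zeta^r with n, r in (1/N)Z is represented by
  its coefficient function s :: int => int => complex, where s i j is the coefficient
  c(i/N, j/N) of q^(i/N) zeta^(j/N).\<close>

type_synonym series = "int \<Rightarrow> int \<Rightarrow> complex"

definition RN :: "nat \<Rightarrow> series set" where
  "RN N = {s. (\<forall>i. finite {j. s i j \<noteq> 0}) \<and> (\<exists>m. \<forall>i j. s i j \<noteq> 0 \<longrightarrow> m \<le> i)}"

definition supp :: "nat \<Rightarrow> series \<Rightarrow> (real \<times> real) set" where
  "supp N s = {(real_of_int i / real N, real_of_int j / real N) | i j. s i j \<noteq> 0}"

definition RJ :: "nat \<Rightarrow> series set" where
  "RJ N = {s \<in> RN N. \<exists>a b c. a > 0 \<and>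
      supp N s \<subseteq> {(n, r). n \<ge> a * r^2 + b * r + c}}"

definition ser_zero :: series where "ser_zero = (\<lambda>i j. 0)"
definition ser_one :: series where "ser_one = (\<lambda>i j. if i = 0 \<and> j = 0 then 1 else 0)"
definition ser_add :: "series \<Rightarrow> series \<Rightarrow> series" where
  "ser_add s t = (\<lambda>i j. s i j + t i j)"
definition ser_neg :: "series \<Rightarrow> series" where
  "ser_neg s = (\<lambda>i j. - s i j)"

text \<open>Product of formal series (Cauchy product); for s, t in R(N) the index set is finite.\<close>
definition ser_mult :: "series \<Rightarrow> series \<Rightarrow> series" where
  "ser_mult s t = (\<lambda>i j. \<Sum>p\<in>{(i1, j1). s i1 j1 \<noteq> 0 \<and> t (i - i1) (j - j1) \<noteq> 0}.
      s (fst p) (snd p) * t (i - fst p) (j - snd p))"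

end

theory Submission
  imports Defs
begin

definition Q :: "series \<Rightarrow> bool" where
  "Q s = (\<exists>a C. a > (0::real) \<and> (\<forall>i j. s i j \<noteq> 0 \<longrightarrow> a * (real_of_int j)^2 + C \<le> real_of_int i))"

lemma Q_RN: assumes "Q s" shows "s \<in> RN N"
proof -
  obtain a C where a: "a > 0" and h: "\<And>i j. s i j \<noteq> 0 \<Longrightarrow> a * (real_of_int j)^2 + C \<le> real_of_int i"
    using assms unfolding Q_def by blast
  have fin: "finite {j. s i j \<noteq> 0}" for i
  proof -
    define K where "K = ceiling ((real_of_int i - C) / a)"
    have "{j. s i j \<noteq> 0} \<subseteq> {-K..K}"
    proof
      fix j assume "j \<in> {j. s i j \<noteq> 0}"
      hence hj: "a * (real_of_int j)^2 + C \<le> real_of_int i" using h by auto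
      have "\<bar>j\<bar> \<le> j^2"
      proof (cases "j = 0")
        case False
        hence "1 \<le> \<bar>j\<bar>" by linarith
        hence "\<bar>j\<bar> * 1 \<le> \<bar>j\<bar> * \<bar>j\<bar>" by (intro mult_left_mono) auto
        thus ?thesis by (simp add: power2_eq_square abs_mult[symmetric])
      qed simp
      hence "real_of_int \<bar>j\<bar> \<le> (real_of_int j)^2"
        by (metis of_int_le_iff of_int_power)
      hence "a * real_of_int \<bar>j\<bar> \<le> a * (real_of_int j)^2" using a
        by (intro mult_left_mono) auto
      hence "a * real_of_int \<bar>j\<bar> \<le> real_of_int i - C" using hj by linarith
      hence "real_of_int \<bar>j\<bar> \<le> (real_of_int i - C) / a" using a by (simp add: field_simps)
      hence "\<bar>j\<bar> \<le> K" unfolding K_def by linarith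
      thus "j \<in> {-K..K}" by auto
    qed
    thus ?thesis by (rule finite_subset) simp
  qed
  have "\<forall>i j. s i j \<noteq> 0 \<longrightarrow> floor C \<le> i"
  proof (intro allI impI)
    fix i j assume "s i j \<noteq> 0"
    hence "a * (real_of_int j)^2 + C \<le> real_of_int i" by (rule h)
    moreover have "a * (real_of_int j)^2 \<ge> 0" using a by simp
    ultimately show "floor C \<le> i" by linarith
  qed
  thus ?thesis unfolding RN_def using fin by blast
qed

lemma RJ_Q: assumes N: "N \<ge> 1" shows "s \<in> RJ N \<longleftrightarrow> Q s"
proof
  assume "s \<in> RJ N"
  then obtain a b c where a: "a > 0" and sub: "supp N s \<subseteq> {(n, r). n \<ge> a * r^2 + b * r + c}"
    unfolding RJ_def by blast
  have NN: "real N > 0" using N by simp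
  show "Q s" unfolding Q_def
  proof (intro exI conjI allI impI)
    show "a / (2 * real N) > 0" using a NN by simp
    fix i j assume "s i j \<noteq> 0"
    hence "(real_of_int i / real N, real_of_int j / real N) \<in> supp N s" unfolding supp_def by blast
    hence h: "real_of_int i / real N \<ge> a * (real_of_int j / real N)^2 + b * (real_of_int j / real N) + c"
      using sub by auto
    define x where "x = real_of_int j / real N"
    have sq: "a/2 * x^2 + b * x + b^2/(2*a) \<ge> 0"
    proof -
      have "a/2 * x^2 + b * x + b^2/(2*a) = (a/2) * (x + b/a)^2" using a
        by (simp add: field_simps power2_eq_square)
      also have "\<dots> \<ge> 0" using a by simp
      finally show ?thesis .
    qed
    have "real_of_int i / real N \<ge> a/2 * x^2 + (c - b^2/(2*a))" using h sq unfolding x_def by linarith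
    hence "real_of_int i \<ge> real N * (a/2 * x^2 + (c - b^2/(2*a)))" using NN by (simp add: field_simps)
    moreover have "real N * (a/2 * x^2) = a / (2 * real N) * (real_of_int j)^2"
      unfolding x_def using NN by (simp add: field_simps power2_eq_square)
    ultimately show "a / (2 * real N) * (real_of_int j)^2 + real N * (c - b^2/(2*a)) \<le> real_of_int i"
      by (simp add: distrib_left)
  qed
next
  assume q: "Q s"
  then obtain a C where a: "a > 0" and h: "\<And>i j. s i j \<noteq> 0 \<Longrightarrow> a * (real_of_int j)^2 + C \<le> real_of_int i"
    unfolding Q_def by blast
  have NN: "real N > 0" using N by simp
  have "supp N s \<subseteq> {(n, r). n \<ge> (a * real N) * r^2 + 0 * r + C / real N}"
  proof
    fix p assume "p \<in> supp N s"
    then obtain i j where p: "p = (real_of_int i / real N, real_of_int j / real N)" and nz: "s i j \<noteq> 0"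
      unfolding supp_def by blast
    have "a * (real_of_int j)^2 + C \<le> real_of_int i" using h nz .
    hence "(a * (real_of_int j)^2 + C) / real N \<le> real_of_int i / real N" using NN by (simp add: divide_right_mono)
    moreover have "(a * (real_of_int j)^2 + C) / real N = (a * real N) * (real_of_int j / real N)^2 + 0 * (real_of_int j / real N) + C / real N"
      using NN by (simp add: field_simps power2_eq_square)
    ultimately show "p \<in> {(n, r). n \<ge> (a * real N) * r^2 + 0 * r + C / real N}" using p by simp
  qed
  moreover have "a * real N > 0" using a NN by simp
  ultimately show "s \<in> RJ N" unfolding RJ_def using Q_RN[OF q] by blast
qed

lemma Q_add: assumes "Q s" "Q t" shows "Q (ser_add s t)"
proof -
  obtain a1 C1 where a1: "a1 > 0" and h1: "\<And>i j. s i j \<noteq> 0 \<Longrightarrow> a1 * (real_of_int j)^2 + C1 \<le> real_of_int i"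
    using assms(1) unfolding Q_def by blast
  obtain a2 C2 where a2: "a2 > 0" and h2: "\<And>i j. t i j \<noteq> 0 \<Longrightarrow> a2 * (real_of_int j)^2 + C2 \<le> real_of_int i"
    using assms(2) unfolding Q_def by blast
  show ?thesis unfolding Q_def
  proof (intro exI conjI allI impI)
    show "min a1 a2 > 0" using a1 a2 by simp
    fix i j assume "ser_add s t i j \<noteq> 0"
    hence "s i j \<noteq> 0 \<or> t i j \<noteq> 0" unfolding ser_add_def by auto
    moreover have "min a1 a2 * (real_of_int j)^2 \<le> a1 * (real_of_int j)^2"
      by (intro mult_right_mono) auto
    moreover have "min a1 a2 * (real_of_int j)^2 \<le> a2 * (real_of_int j)^2"
      by (intro mult_right_mono) auto
    moreover have "min C1 C2 \<le> C1" "min C1 C2 \<le> C2" by auto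
    ultimately show "min a1 a2 * (real_of_int j)^2 + min C1 C2 \<le> real_of_int i"
      using h1[of i j] h2[of i j] by (elim disjE) linarith+
  qed
qed

lemma Q_neg: assumes "Q s" shows "Q (ser_neg s)"
  using assms unfolding Q_def ser_neg_def by simp

lemma Q_mult: assumes "Q s" "Q t" shows "Q (ser_mult s t)"
proof -
  obtain a1 C1 where a1: "a1 > 0" and h1: "\<And>i j. s i j \<noteq> 0 \<Longrightarrow> a1 * (real_of_int j)^2 + C1 \<le> real_of_int i"
    using assms(1) unfolding Q_def by blast
  obtain a2 C2 where a2: "a2 > 0" and h2: "\<And>i j. t i j \<noteq> 0 \<Longrightarrow> a2 * (real_of_int j)^2 + C2 \<le> real_of_int i"
    using assms(2) unfolding Q_def by blast
  define m where "m = min a1 a2"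
  have m: "m > 0" using a1 a2 unfolding m_def by simp
  show ?thesis unfolding Q_def
  proof (intro exI conjI allI impI)
    show "m / 2 > 0" using m by simp
    fix i j assume "ser_mult s t i j \<noteq> 0"
    then obtain i1 j1 where s1: "s i1 j1 \<noteq> 0" and t1: "t (i - i1) (j - j1) \<noteq> 0"
      proof -
      assume nz: "ser_mult s t i j \<noteq> 0"
      assume r: "\<And>i1 j1. s i1 j1 \<noteq> 0 \<Longrightarrow> t (i - i1) (j - j1) \<noteq> 0 \<Longrightarrow> thesis"
      let ?A = "{(i1, j1). s i1 j1 \<noteq> 0 \<and> t (i - i1) (j - j1) \<noteq> 0}"
      have "?A \<noteq> {}"
      proof
        assume "?A = {}"
        hence "ser_mult s t i j = 0" unfolding ser_mult_def by (simp only: sum.empty)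
        thus False using nz by simp
      qed
      then obtain p where "p \<in> ?A" by blast
      thus thesis using r by (cases p) auto
    qed
    define x where "x = real_of_int j1"
    define y where "y = real_of_int (j - j1)"
    have e1: "a1 * x^2 + C1 \<le> real_of_int i1" using h1[OF s1] unfolding x_def .
    have e2: "a2 * y^2 + C2 \<le> real_of_int (i - i1)" using h2[OF t1] unfolding y_def .
    have "m * x^2 \<le> a1 * x^2" unfolding m_def by (intro mult_right_mono) auto
    moreover have "m * y^2 \<le> a2 * y^2" unfolding m_def by (intro mult_right_mono) auto
    moreover have "m / 2 * (x + y)^2 \<le> m * x^2 + m * y^2"
    proof -
      have "m * x^2 + m * y^2 - m / 2 * (x + y)^2 = m / 2 * (x - y)^2"
        by (simp add: field_simps power2_eq_square)
      also have "\<dots> \<ge> 0" using m by simp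
      finally show ?thesis by simp
    qed
    moreover have "real_of_int j = x + y" unfolding x_def y_def by simp
    ultimately show "m / 2 * (real_of_int j)^2 + (C1 + C2) \<le> real_of_int i"
      using e1 e2 by simp
  qed
qed

theorem proposition4p3:
  fixes N :: nat
  assumes "N \<ge> 1"
  shows "RJ N \<subseteq> RN N \<and> ser_zero \<in> RJ N \<and> ser_one \<in> RJ N
    \<and> (\<forall>s\<in>RJ N. \<forall>t\<in>RJ N. ser_add s t \<in> RJ N)
    \<and> (\<forall>s\<in>RJ N. ser_neg s \<in> RJ N)
    \<and> (\<forall>s\<in>RJ N. \<forall>t\<in>RJ N. ser_mult s t \<in> RJ N)"
proof -
  have Q0: "Q ser_zero" unfolding Q_def ser_zero_def by (rule exI[of _ 1]) simp
  have Q1: "Q ser_one" unfolding Q_def ser_one_def by (rule exI[of _ 1], rule exI[of _ 0]) simp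
  have sub: "RJ N \<subseteq> RN N" unfolding RJ_def by blast
  show ?thesis using sub RJ_Q[OF assms] Q0 Q1 Q_add Q_neg Q_mult by metis
qed

end
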